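(* Consider the model below with $\epsilon_2\ge0$, fix all parameters other than $\epsilon_1$, let $\delta:=(M-1)(1-M_f\beta)+\lambda\sigma N$, and let $\bar{\epsilon}_{BR,RPE}\in[-\infty,\infty)$ be the number such that a BR-RPE exists if and only if $\epsilon_1\ge\bar{\epsilon}_{BR,RPE}$. If $\epsilon_1>\bar{\epsilon}_{BR,RPE}$, then: (i) there is exactly one E-stable BR-RPE; (ii) if $\delta\ge0$, the E-stable BR-RPE is of type PP or of type ZP; (iii) if $\delta<0$, the E-stable BR-RPE is the unique BR-RPE.
   Context: Parameters: $0<\beta<1$, $\sigma,\lambda,\mu>0$, $\psi>1$, $M,M_f,N\in(0,1]$ with $\min\{M,M_f,N\}<1$, $p,q\in(0,1]$ with $(p,q)\neq(1,1)$. The shock $\epsilon_t$ is a two-state Markov chain on $\{\epsilon_1,\epsilon_2\}$ with $\Pr(\epsilon_{t+1}=\epsilon_1\mid\epsilon_t=\epsilon_1)=p$, $\Pr(\epsilon_{t+1}=\epsilon_2\mid\epsilon_t=\epsilon_2)=q$; $\bar q:=(1-p)/(2-p-q)$. Model: $x_t=M\hat E_t x_{t+1}-\sigma(i_t-N\hat E_t\pi_{t+1})+\epsilon_t$, $\pi_t=\lambda x_t+M_f\beta\hat E_t\pi_{t+1}$, $i_t=\max\{\psi\pi_t,-\mu\}$. A BR-RPE is a pair $Y_j=(x_j,\pi_j)$, $j=1,2$, such that with $(\bar x,\bar\pi):=\bar qY_2+(1-\bar q)Y_1$ and $i_j=\max\{\psi\pi_j,-\mu\}$: $x_j=M\bar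 x-\sigma(i_j-N\bar\pi)+\epsilon_j$ and $\pi_j=\lambda x_j+M_f\beta\bar\pi$, $j=1,2$. Types: the ZLB binds in state $j$ if $\psi\pi_j\le-\mu$; type PP (no state), ZP (state 1 only), PZ (state 2 only), ZZ (both). Let $\hat A_P=\frac{1}{1+\lambda\sigma\psi}\begin{pmatrix}M&N\sigma-M_f\beta\sigma\psi\\ M\lambda&M_f\beta+N\lambda\sigma\end{pmatrix}$, $\hat A_Z=\begin{pmatrix}M&N\sigma\\ M\lambda&M_f\beta+N\lambda\sigma\end{pmatrix}$, $I$ the $2\times2$ identity, $DT^{PP}=\hat A_P-I$, $DT^{ZP}=\bar q\hat A_P+(1-\bar q)\hat A_Z-I$, $DT^{PZ}=(1-\bar q)\hat A_P+\bar q\hat A_Z-I$, $DT^{ZZ}=\hat A_Z-I$. A BR-RPE of type $i$ is E-stable if all eigenvalues of $DT^i$ have negative real parts. *)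

theory Defs
  imports Complex_Main "HOL-Library.Extended_Real" "Jordan_Normal_Form.Char_Poly"
begin

text \<open>Stationary probability weight of state 2: qbar = (1-p)/(2-p-q).\<close>
definition qbar :: "real \<Rightarrow> real \<Rightarrow> real" where
  "qbar p q = (1 - p) / (2 - p - q)"

definition is_BR_RPE ::
  "real \<Rightarrow> real \<Rightarrow> real \<Rightarrow> real \<Rightarrow> real \<Rightarrow> real \<Rightarrow> real \<Rightarrow> real \<Rightarrow> real \<Rightarrow> real
   \<Rightarrow> real \<Rightarrow> real \<Rightarrow> real \<times> real \<Rightarrow> real \<times> real \<Rightarrow> bool" where
  "is_BR_RPE \<beta> \<sigma> lam \<mu> \<psi> M Mf N p q e1 e2 Y1 Y2 =
    (let qb = qbar p q;
         x1 = fst Y1; pi1 = snd Y1; x2 = fst Y2; pi2 = snd Y2;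
         xb = qb * x2 + (1 - qb) * x1;
         pib = qb * pi2 + (1 - qb) * pi1;
         i1 = max (\<psi> * pi1) (- \<mu>);
         i2 = max (\<psi> * pi2) (- \<mu>)
     in x1 = M * xb - \<sigma> * (i1 - N * pib) + e1 \<and> pi1 = lam * x1 + Mf * \<beta> * pib \<and>
        x2 = M * xb - \<sigma> * (i2 - N * pib) + e2 \<and> pi2 = lam * x2 + Mf * \<beta> * pib)"

datatype eq_type = PP | ZP | PZ | ZZ

definition zlb_binds :: "real \<Rightarrow> real \<Rightarrow> real \<Rightarrow> bool" where
  "zlb_binds \<psi> \<mu> pi_j = (\<psi> * pi_j \<le> - \<mu>)"

definition type_of :: "real \<Rightarrow> real \<Rightarrow> real \<times> real \<Rightarrow> real \<times> real \<Rightarrow> eq_type" where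
  "type_of \<psi> \<mu> Y1 Y2 =
    (if zlb_binds \<psi> \<mu> (snd Y1) \<and> zlb_binds \<psi> \<mu> (snd Y2) then ZZ
     else if zlb_binds \<psi> \<mu> (snd Y1) then ZP
     else if zlb_binds \<psi> \<mu> (snd Y2) then PZ
     else PP)"

definition A_P :: "real \<Rightarrow> real \<Rightarrow> real \<Rightarrow> real \<Rightarrow> real \<Rightarrow> real \<Rightarrow> real \<Rightarrow> real mat" where
  "A_P \<beta> \<sigma> lam \<psi> M Mf N =
     (1 / (1 + lam * \<sigma> * \<psi>)) \<cdot>\<^sub>m
       mat_of_rows_list 2 [[M, N * \<sigma> - Mf * \<beta> * \<sigma> * \<psi>],
                           [M * lam, Mf * \<beta> + N * lam * \<sigma>]]"

definition A_Z :: "real \<Rightarrow> real \<Rightarrow> real \<Rightarrow> real \<Rightarrow> real \<Rightarrow> real \<Rightarrow> real mat" where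
  "A_Z \<beta> \<sigma> lam M Mf N =
       mat_of_rows_list 2 [[M, N * \<sigma>],
                           [M * lam, Mf * \<beta> + N * lam * \<sigma>]]"

definition DT :: "eq_type \<Rightarrow> real \<Rightarrow> real \<Rightarrow> real \<Rightarrow> real \<Rightarrow> real \<Rightarrow> real \<Rightarrow> real \<Rightarrow> real \<Rightarrow> real \<Rightarrow> real mat" where
  "DT t \<beta> \<sigma> lam \<psi> M Mf N p q =
    (let AP = A_P \<beta> \<sigma> lam \<psi> M Mf N; AZ = A_Z \<beta> \<sigma> lam M Mf N; qb = qbar p q in
     (case t of
        PP \<Rightarrow> AP
      | ZP \<Rightarrow> qb \<cdot>\<^sub>m AP + (1 - qb) \<cdot>\<^sub>m AZ
      | PZ \<Rightarrow> (1 - qb) \<cdot>\<^sub>m AP + qb \<cdot>\<^sub>m AZ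
      | ZZ \<Rightarrow> AZ) - 1\<^sub>m 2)"

definition E_stable ::
  "real \<Rightarrow> real \<Rightarrow> real \<Rightarrow> real \<Rightarrow> real \<Rightarrow> real \<Rightarrow> real \<Rightarrow> real \<Rightarrow> real \<Rightarrow> real
   \<Rightarrow> real \<times> real \<Rightarrow> real \<times> real \<Rightarrow> bool" where
  "E_stable \<beta> \<sigma> lam \<mu> \<psi> M Mf N p q Y1 Y2 =
    (\<forall>z. eigenvalue (map_mat complex_of_real (DT (type_of \<psi> \<mu> Y1 Y2) \<beta> \<sigma> lam \<psi> M Mf N p q)) z
         \<longrightarrow> Re z < 0)"

end

theory Submission imports Defs begin
lemma det2: "(A::'a::comm_ring_1 mat) \<in> carrier_mat 2 2 \<Longrightarrow> det A = A$$(0,0)*A$$(1,1) - A$$(0,1)*A$$(1,0)"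
  apply (subst laplace_expansion_column[of A 2 0])
  apply (auto simp: numeral_2_eq_2 lessThan_Suc cofactor_def mat_delete_def)
  apply (subst (1 2) det_single)
  apply (auto simp: algebra_simps)
  done

lemma eig2:
  fixes B :: "real mat"
  assumes B: "B \<in> carrier_mat 2 2"
  shows "eigenvalue (map_mat complex_of_real B) z \<longleftrightarrow>
     z^2 - of_real (B$$(0,0) + B$$(1,1)) * z + of_real (B$$(0,0)*B$$(1,1) - B$$(0,1)*B$$(1,0)) = 0"
proof -
  have C: "map_mat complex_of_real B \<in> carrier_mat 2 2" using B by simp
  have "eigenvalue (map_mat complex_of_real B) z \<longleftrightarrow> det (char_matrix (map_mat complex_of_real B) z) = 0"
    by (rule eigenvalue_det[OF C])
  also have "det (char_matrix (map_mat complex_of_real B) z) =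
     z^2 - of_real (B$$(0,0) + B$$(1,1)) * z + of_real (B$$(0,0)*B$$(1,1) - B$$(0,1)*B$$(1,0))"
    using B by (subst det2) (auto simp: char_matrix_def power2_eq_square algebra_simps)
  finally show ?thesis .
qed


lemma stab_suff:
  fixes T D :: real and z :: complex
  assumes "D > 0" "T < 0" "z^2 - of_real T * z + of_real D = 0"
  shows "Re z < 0"
proof -
  have r: "Re z ^2 - Im z^2 - T * Re z + D = 0" and i: "2 * Re z * Im z - T * Im z = 0"
    using arg_cong[OF assms(3), of Re] arg_cong[OF assms(3), of Im]
    by (auto simp: power2_eq_square algebra_simps)
  show ?thesis
  proof (cases "Im z = 0")
    case True
    show ?thesis
    proof (rule ccontr)
      assume "\<not> Re z < 0"
      then have a: "Re z \<ge> 0" by simp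
      have "T * Re z \<le> 0" using a assms(2) by (simp add: mult_nonpos_nonneg)
      moreover have "Re z ^2 \<ge> 0" by simp
      moreover have "(Im z)^2 = 0" using True by simp
      ultimately show False using r assms(1) by linarith
    qed
  next
    case False
    have "(2 * Re z - T) * Im z = 0" using i by (simp add: algebra_simps)
    then have "2 * Re z = T" using False by simp
    then show ?thesis using assms by simp
  qed
qed

lemma unstab:
  fixes T D :: real
  assumes "D \<le> 0"
  shows "\<exists>z::complex. z^2 - of_real T * z + of_real D = 0 \<and> Re z \<ge> 0"
proof -
  define r where "r = sqrt (T^2 - 4*D)"
  have "0 \<le> T^2 - 4*D" using assms zero_le_power2[of T] by linarith
  then have r2: "r^2 = T^2 - 4*D" unfolding r_def by simp
  have rT: "r \<ge> \<bar>T\<bar>" unfolding r_def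
  proof -
    have "T^2 \<le> T^2 - 4*D" using assms by simp
    then have "sqrt (T^2) \<le> sqrt (T^2 - 4*D)" by (rule real_sqrt_le_mono)
    then show "\<bar>T\<bar> \<le> sqrt (T^2 - 4*D)" by simp
  qed
  define x where "x = (T + r)/2"
  have "x^2 - T*x + D = 0" unfolding x_def using r2 by (simp add: power2_eq_square field_simps)
  then have "(complex_of_real x)^2 - of_real T * of_real x + of_real D = 0"
    by (metis (mono_tags) of_real_0 of_real_add of_real_diff of_real_mult of_real_power)
  moreover have "x \<ge> 0" unfolding x_def using rT by simp
  ultimately show ?thesis by (intro exI[of _ "complex_of_real x"]) simp
qed

locale brm =
  fixes \<beta> \<sigma> lam \<mu> \<psi> M Mf N p q e2 :: real
  assumes b0: "0 < \<beta>" and b1: "\<beta> < 1" and sg: "\<sigma> > 0" and lam: "lam > 0" and mu: "\<mu> > 0" and psi: "\<psi> > 1"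
    and M0: "0 < M" and M1: "M \<le> 1" and Mf0: "0 < Mf" and Mf1: "Mf \<le> 1" and N0: "0 < N" and N1: "N \<le> 1"
    and p0: "0 < p" and p1: "p \<le> 1" and q0: "0 < q" and q1: "q \<le> 1" and pq: "(p, q) \<noteq> (1, 1)"
    and e2: "e2 \<ge> 0"
begin

definition "qb = qbar p q"
definition "cc = 1 - Mf*\<beta>"
definition "ss = 1 + lam*\<sigma>*\<psi>"
definition "aZ = M + \<sigma>*N*lam/cc"
definition "aP = (M + \<sigma>*N*lam/cc - \<sigma>*\<psi>*Mf*\<beta>*lam/cc)/ss"
definition "wt t = (case t of PP \<Rightarrow> 1 | ZP \<Rightarrow> qb | PZ \<Rightarrow> 1 - qb | ZZ \<Rightarrow> 0)"

lemma qb_bounds: "0 \<le> qb" "qb \<le> 1"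
proof -
  have d: "2 - p - q > 0" using p1 q1 pq by (cases "p = 1"; cases "q = 1") auto
  show "0 \<le> qb" unfolding qb_def qbar_def using d p1 by simp
  show "qb \<le> 1" unfolding qb_def qbar_def using d q1 by (simp add: divide_le_eq_1)
qed

lemma cc_pos: "cc > 0"
proof -
  have "Mf * \<beta> \<le> 1 * \<beta>" by (rule mult_right_mono[OF Mf1]) (use b0 in simp)
  then have "Mf * \<beta> < 1" using b1 by simp
  then show ?thesis unfolding cc_def by simp
qed

lemma ss_pos: "ss > 1"
  unfolding ss_def using lam sg psi by simp

lemma idx1: "(A::real mat) \<in> carrier_mat 2 2 \<Longrightarrow> i < 2 \<Longrightarrow> j < 2 \<Longrightarrow>
   (A - 1\<^sub>m 2) $$ (i,j) = A $$ (i,j) - (if i = j then 1 else 0)"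
  by simp

lemma idx2: "(A::real mat) \<in> carrier_mat 2 2 \<Longrightarrow> B \<in> carrier_mat 2 2 \<Longrightarrow> i < 2 \<Longrightarrow> j < 2 \<Longrightarrow>
   (a \<cdot>\<^sub>m A + b \<cdot>\<^sub>m B - 1\<^sub>m 2) $$ (i,j) = a * A $$ (i,j) + b * B $$ (i,j) - (if i = j then 1 else 0)"
  by simp

lemma AP_c: "A_P \<beta> \<sigma> lam \<psi> M Mf N \<in> carrier_mat 2 2"
  unfolding A_P_def mat_of_rows_list_def carrier_mat_def by simp
lemma AZ_c: "A_Z \<beta> \<sigma> lam M Mf N \<in> carrier_mat 2 2"
  unfolding A_Z_def mat_of_rows_list_def carrier_mat_def by simp

lemma AP_e: "A_P \<beta> \<sigma> lam \<psi> M Mf N $$ (0,0) = M/ss"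
  "A_P \<beta> \<sigma> lam \<psi> M Mf N $$ (0,1) = (N*\<sigma> - Mf*\<beta>*\<sigma>*\<psi>)/ss"
  "A_P \<beta> \<sigma> lam \<psi> M Mf N $$ (1,0) = (M*lam)/ss"
  "A_P \<beta> \<sigma> lam \<psi> M Mf N $$ (1,1) = (Mf*\<beta> + N*lam*\<sigma>)/ss"
  unfolding A_P_def mat_of_rows_list_def ss_def by simp_all

lemma AZ_e: "A_Z \<beta> \<sigma> lam M Mf N $$ (0,0) = M"
  "A_Z \<beta> \<sigma> lam M Mf N $$ (0,1) = N*\<sigma>"
  "A_Z \<beta> \<sigma> lam M Mf N $$ (1,0) = M*lam"
  "A_Z \<beta> \<sigma> lam M Mf N $$ (1,1) = Mf*\<beta> + N*lam*\<sigma>"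
  unfolding A_Z_def mat_of_rows_list_def by simp_all

lemma DT_cases: "DT t \<beta> \<sigma> lam \<psi> M Mf N p q =
   (case t of PP \<Rightarrow> A_P \<beta> \<sigma> lam \<psi> M Mf N - 1\<^sub>m 2
     | ZP \<Rightarrow> qb \<cdot>\<^sub>m A_P \<beta> \<sigma> lam \<psi> M Mf N + (1 - qb) \<cdot>\<^sub>m A_Z \<beta> \<sigma> lam M Mf N - 1\<^sub>m 2
     | PZ \<Rightarrow> (1 - qb) \<cdot>\<^sub>m A_P \<beta> \<sigma> lam \<psi> M Mf N + qb \<cdot>\<^sub>m A_Z \<beta> \<sigma> lam M Mf N - 1\<^sub>m 2
     | ZZ \<Rightarrow> A_Z \<beta> \<sigma> lam M Mf N - 1\<^sub>m 2)"
  unfolding DT_def Let_def qb_def by (cases t) simp_all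

lemma DT_idx: assumes "i < 2" "j < 2"
  shows "DT t \<beta> \<sigma> lam \<psi> M Mf N p q $$ (i,j) = wt t * A_P \<beta> \<sigma> lam \<psi> M Mf N $$ (i,j)
     + (1 - wt t) * A_Z \<beta> \<sigma> lam M Mf N $$ (i,j) - (if i = j then 1 else 0)"
  using assms AP_c AZ_c by (cases t) (simp_all add: DT_cases wt_def idx1 idx2)

lemma DT_entries:
  shows "DT t \<beta> \<sigma> lam \<psi> M Mf N p q \<in> carrier_mat 2 2"
   and "DT t \<beta> \<sigma> lam \<psi> M Mf N p q $$ (0,0) = wt t * M/ss + (1 - wt t)*M - 1"
   and "DT t \<beta> \<sigma> lam \<psi> M Mf N p q $$ (0,1) = wt t * (N*\<sigma> - Mf*\<beta>*\<sigma>*\<psi>)/ss + (1 - wt t)*(N*\<sigma>)"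
   and "DT t \<beta> \<sigma> lam \<psi> M Mf N p q $$ (1,0) = wt t * (M*lam)/ss + (1 - wt t)*(M*lam)"
   and "DT t \<beta> \<sigma> lam \<psi> M Mf N p q $$ (1,1) = wt t * (Mf*\<beta> + N*lam*\<sigma>)/ss + (1 - wt t)*(Mf*\<beta> + N*lam*\<sigma>) - 1"
proof -
  show "DT t \<beta> \<sigma> lam \<psi> M Mf N p q \<in> carrier_mat 2 2"
    by (cases t) (simp_all add: DT_cases minus_carrier_mat)
  show "DT t \<beta> \<sigma> lam \<psi> M Mf N p q $$ (0,0) = wt t * M/ss + (1 - wt t)*M - 1"
    by (simp add: DT_idx AP_e AZ_e AP_e[unfolded One_nat_def] AZ_e[unfolded One_nat_def])
  show "DT t \<beta> \<sigma> lam \<psi> M Mf N p q $$ (0,1) = wt t * (N*\<sigma> - Mf*\<beta>*\<sigma>*\<psi>)/ss + (1 - wt t)*(N*\<sigma>)"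
    by (simp add: DT_idx AP_e AZ_e AP_e[unfolded One_nat_def] AZ_e[unfolded One_nat_def])
  show "DT t \<beta> \<sigma> lam \<psi> M Mf N p q $$ (1,0) = wt t * (M*lam)/ss + (1 - wt t)*(M*lam)"
    by (simp add: DT_idx AP_e AZ_e AP_e[unfolded One_nat_def] AZ_e[unfolded One_nat_def])
  show "DT t \<beta> \<sigma> lam \<psi> M Mf N p q $$ (1,1) = wt t * (Mf*\<beta> + N*lam*\<sigma>)/ss + (1 - wt t)*(Mf*\<beta> + N*lam*\<sigma>) - 1"
    by (simp add: DT_idx AP_e AZ_e AP_e[unfolded One_nat_def] AZ_e[unfolded One_nat_def])
qed

lemma det_tr:
  fixes w :: real
  shows "(w * M/ss + (1 - w)*M - 1) * (w * (Mf*\<beta> + N*lam*\<sigma>)/ss + (1 - w)*(Mf*\<beta> + N*lam*\<sigma>) - 1)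
         - (w * (N*\<sigma> - Mf*\<beta>*\<sigma>*\<psi>)/ss + (1 - w)*(N*\<sigma>)) * (w * (M*lam)/ss + (1 - w)*(M*lam))
        = - cc * (w*aP + (1-w)*aZ - 1)"
   and "(w * M/ss + (1 - w)*M - 1) + (w * (Mf*\<beta> + N*lam*\<sigma>)/ss + (1 - w)*(Mf*\<beta> + N*lam*\<sigma>) - 1)
        = cc * (w*aP + (1-w)*aZ) + Mf*\<beta>*M*(w/ss + 1 - w) + Mf*\<beta> - 2"
proof -
  have c: "cc \<noteq> 0" using cc_pos by simp
  have s: "ss \<noteq> 0" using ss_pos by simp
  have s': "ss = 1 + lam*\<sigma>*\<psi>" by (simp add: ss_def)
  have c': "cc = 1 - Mf*\<beta>" by (simp add: cc_def)
  show "(w * M/ss + (1 - w)*M - 1) * (w * (Mf*\<beta> + N*lam*\<sigma>)/ss + (1 - w)*(Mf*\<beta> + N*lam*\<sigma>) - 1)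
         - (w * (N*\<sigma> - Mf*\<beta>*\<sigma>*\<psi>)/ss + (1 - w)*(N*\<sigma>)) * (w * (M*lam)/ss + (1 - w)*(M*lam))
        = - cc * (w*aP + (1-w)*aZ - 1)"
    unfolding aP_def aZ_def using c s
    apply (simp add: field_simps)
    apply (simp add: s' c' algebra_simps)
    done
  show "(w * M/ss + (1 - w)*M - 1) + (w * (Mf*\<beta> + N*lam*\<sigma>)/ss + (1 - w)*(Mf*\<beta> + N*lam*\<sigma>) - 1)
        = cc * (w*aP + (1-w)*aZ) + Mf*\<beta>*M*(w/ss + 1 - w) + Mf*\<beta> - 2"
    unfolding aP_def aZ_def using c s
    apply (simp add: field_simps)
    apply (simp add: s' c' algebra_simps)
    done
qed


definition "av b = (if b then aZ else aP)"
definition "S b1 b2 = qb*av b2 + (1-qb)*av b1 - 1"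

lemma aZ_pos: "aZ > 0"
proof -
  have "\<sigma>*N*lam/cc > 0" using sg N0 lam cc_pos by simp
  then show ?thesis unfolding aZ_def using M0 by linarith
qed

lemma ss_aP: "ss * aP = aZ - \<sigma>*\<psi>*Mf*\<beta>*lam/cc"
proof -
  have "ss \<noteq> 0" using ss_pos by simp
  then show ?thesis unfolding aP_def aZ_def by simp
qed

lemma aP_lt_aZ: "aP < aZ"
proof -
  have "\<sigma>*\<psi>*Mf*\<beta>*lam/cc > 0" using sg psi Mf0 b0 lam cc_pos by simp
  then have "ss * aP < aZ" using ss_aP by linarith
  also have "aZ \<le> ss * aZ" using ss_pos aZ_pos by simp
  finally have "ss * aP < ss * aZ" .
  then show ?thesis using ss_pos by simp
qed

lemma cc_aZ: "cc*aZ = cc*M + \<sigma>*N*lam"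
proof -
  have "cc \<noteq> 0" using cc_pos by simp
  then show ?thesis unfolding aZ_def by (simp add: distrib_left)
qed

lemma aP_lt1: "aP < 1"
proof -
  have "cc * M \<le> cc" using cc_pos M1 by simp
  moreover have "\<sigma>*N*lam < lam*\<sigma>*\<psi>" using N1 psi sg lam by simp
  ultimately have "cc*aZ - cc < lam*\<sigma>*\<psi>" using cc_aZ by linarith
  then have "cc*(aZ - 1) < lam*\<sigma>*\<psi>" by (simp add: right_diff_distrib)
  then have "aZ - 1 < lam*\<sigma>*\<psi>/cc" using cc_pos by (simp add: pos_less_divide_eq mult.commute)
  moreover have "lam*\<sigma>*\<psi>/cc = lam*\<sigma>*\<psi> + \<sigma>*\<psi>*Mf*\<beta>*lam/cc"
  proof -
    have "cc \<noteq> 0" using cc_pos by simp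
    have e: "lam*\<sigma>*\<psi>*cc + \<sigma>*\<psi>*Mf*\<beta>*lam = lam*\<sigma>*\<psi>" by (simp add: cc_def algebra_simps)
    have "lam*\<sigma>*\<psi>/cc = (lam*\<sigma>*\<psi>*cc + \<sigma>*\<psi>*Mf*\<beta>*lam)/cc" by (simp only: e)
    also have "\<dots> = lam*\<sigma>*\<psi>*cc/cc + \<sigma>*\<psi>*Mf*\<beta>*lam/cc" by (rule add_divide_distrib)
    also have "lam*\<sigma>*\<psi>*cc/cc = lam*\<sigma>*\<psi>" using \<open>cc \<noteq> 0\<close> by simp
    finally show ?thesis .
  qed
  ultimately have "ss * aP < ss" using ss_aP unfolding ss_def by linarith
  then show ?thesis using ss_pos by simp
qed

lemma aZ_delta: "aZ \<ge> 1 \<longleftrightarrow> (M - 1) * (1 - Mf * \<beta>) + lam * \<sigma> * N \<ge> 0"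
proof -
  have "cc*(aZ - 1) = (M - 1) * (1 - Mf * \<beta>) + lam * \<sigma> * N"
    using cc_aZ by (simp add: cc_def algebra_simps)
  moreover have "aZ \<ge> 1 \<longleftrightarrow> cc*(aZ - 1) \<ge> 0" using cc_pos by (simp add: zero_le_mult_iff)
  ultimately show ?thesis by simp
qed

lemma wt_S: "wt (type_of \<psi> \<mu> Y1 Y2) * aP + (1 - wt (type_of \<psi> \<mu> Y1 Y2)) * aZ - 1
   = S (zlb_binds \<psi> \<mu> (snd Y1)) (zlb_binds \<psi> \<mu> (snd Y2))"
  unfolding type_of_def S_def av_def wt_def by (simp add: algebra_simps)


lemma wt_bounds: "0 \<le> wt t \<and> wt t \<le> 1"
  using qb_bounds by (cases t) (simp_all add: wt_def)

lemma Estab: "E_stable \<beta> \<sigma> lam \<mu> \<psi> M Mf N p q Y1 Y2 \<longleftrightarrow>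
   S (zlb_binds \<psi> \<mu> (snd Y1)) (zlb_binds \<psi> \<mu> (snd Y2)) < 0"
proof -
  define t where "t = type_of \<psi> \<mu> Y1 Y2"
  define B where "B = DT t \<beta> \<sigma> lam \<psi> M Mf N p q"
  define w where "w = wt t"
  define Sv where "Sv = S (zlb_binds \<psi> \<mu> (snd Y1)) (zlb_binds \<psi> \<mu> (snd Y2))"
  have Bc: "B \<in> carrier_mat 2 2" unfolding B_def by (rule DT_entries)
  have Sv: "Sv = w*aP + (1-w)*aZ - 1" unfolding Sv_def w_def t_def using wt_S by simp
  have D: "B$$(0,0)*B$$(1,1) - B$$(0,1)*B$$(1,0) = - cc * Sv"
    unfolding B_def DT_entries Sv w_def by (rule det_tr(1))
  have T: "B$$(0,0) + B$$(1,1) = cc * (Sv + 1) + Mf*\<beta>*M*(w/ss + 1 - w) + Mf*\<beta> - 2"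
    unfolding B_def DT_entries Sv w_def using det_tr(2)[of "wt t"] by simp
  have ES: "E_stable \<beta> \<sigma> lam \<mu> \<psi> M Mf N p q Y1 Y2 \<longleftrightarrow>
     (\<forall>z. eigenvalue (map_mat complex_of_real B) z \<longrightarrow> Re z < 0)"
    unfolding E_stable_def B_def t_def by simp
  show ?thesis unfolding Sv_def[symmetric]
  proof
    assume E: "E_stable \<beta> \<sigma> lam \<mu> \<psi> M Mf N p q Y1 Y2"
    show "Sv < 0"
    proof (rule ccontr)
      assume "\<not> Sv < 0"
      then have "cc * Sv \<ge> 0" using cc_pos by simp
      then have "B$$(0,0)*B$$(1,1) - B$$(0,1)*B$$(1,0) \<le> 0" using D by linarith
      from unstab[OF this, of "B$$(0,0) + B$$(1,1)"] obtain z where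
        z: "z^2 - complex_of_real (B$$(0,0) + B$$(1,1)) * z + complex_of_real (B$$(0,0)*B$$(1,1) - B$$(0,1)*B$$(1,0)) = 0"
        "Re z \<ge> 0" by blast
      have "eigenvalue (map_mat complex_of_real B) z" using eig2[OF Bc] z(1) by simp
      then have "Re z < 0" using E ES by blast
      then show False using z(2) by simp
    qed
  next
    assume Sneg: "Sv < 0"
    have "cc * Sv < 0" using cc_pos Sneg by (simp add: mult_pos_neg)
    then have Dp: "B$$(0,0)*B$$(1,1) - B$$(0,1)*B$$(1,0) > 0" using D by linarith
    have wb: "0 \<le> w" "w \<le> 1" using wt_bounds[of t] unfolding w_def by auto
    have "w/ss \<le> w" using wb ss_pos by (simp add: divide_le_eq mult_le_cancel_left1)
    moreover have "w/ss \<ge> 0" using wb ss_pos by simp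
    ultimately have w1: "0 \<le> w/ss + 1 - w" "w/ss + 1 - w \<le> 1" using wb by linarith+
    have "M*(w/ss + 1 - w) \<le> 1" using w1 M0 M1 by (simp add: mult_le_one)
    moreover have "Mf*\<beta> \<ge> 0" using Mf0 b0 by simp
    ultimately have "Mf*\<beta>*(M*(w/ss + 1 - w)) \<le> Mf*\<beta>" by (simp add: mult_left_le)
    then have MMf: "Mf*\<beta>*M*(w/ss + 1 - w) \<le> Mf*\<beta>" by (simp add: mult.assoc)
    have "cc * (Sv + 1) < cc" using cc_pos Sneg by simp
    moreover have "cc = 1 - Mf*\<beta>" by (simp add: cc_def)
    ultimately have Tn: "B$$(0,0) + B$$(1,1) < 0" unfolding T using MMf cc_pos by linarith
    show "E_stable \<beta> \<sigma> lam \<mu> \<psi> M Mf N p q Y1 Y2"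
      unfolding ES
    proof (intro allI impI)
      fix z assume "eigenvalue (map_mat complex_of_real B) z"
      then show "Re z < 0" using eig2[OF Bc] stab_suff[OF Dp Tn] by simp
    qed
  qed
qed


definition "LZ X e = aZ*X + \<sigma>*\<mu> + e"
definition "LP X e = aP*X + e/ss"
definition "L b X e = (if b then LZ X e else LP X e)"

definition "state_ok x \<pi> X e \<longleftrightarrow>
   x = M*X - \<sigma>*(max (\<psi>*\<pi>) (-\<mu>) - N*(lam*X/cc)) + e \<and> \<pi> = lam*x + Mf*\<beta>*(lam*X/cc)"

lemma ss_LP: "ss * LP X e = LZ X e - \<sigma>*\<mu> - \<sigma>*\<psi>*(Mf*\<beta>*(lam*X/cc))"
proof -
  have "ss * LP X e = ss*aP*X + e" unfolding LP_def using ss_pos by (simp add: distrib_left)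
  also have "\<dots> = aZ*X - \<sigma>*\<psi>*Mf*\<beta>*lam/cc*X + e" using ss_aP by (simp add: left_diff_distrib)
  finally show ?thesis unfolding LZ_def by simp
qed

lemma aZX: "aZ*X = M*X + \<sigma>*N*(lam*X/cc)"
  unfolding aZ_def by (simp add: distrib_right)

lemma ssm1: "ss - 1 = lam*\<sigma>*\<psi>" unfolding ss_def by simp

lemma caseZ_gap:
  assumes "\<pi> = lam * LZ X e + Mf*\<beta>*(lam*X/cc)"
  shows "ss * (LZ X e - LP X e) = \<sigma>*(\<psi>*\<pi> + \<mu>)"
proof -
  have "ss * (LZ X e - LP X e) = (ss - 1) * LZ X e + LZ X e - ss * LP X e" by (simp add: algebra_simps)
  also have "\<dots> = lam*\<sigma>*\<psi> * LZ X e + \<sigma>*\<mu> + \<sigma>*\<psi>*(Mf*\<beta>*(lam*X/cc))" unfolding ssm1 ss_LP by simp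
  also have "\<dots> = \<sigma>*(\<psi>*\<pi> + \<mu>)" unfolding assms by (simp add: algebra_simps)
  finally show ?thesis .
qed

lemma caseP_gap:
  assumes "\<pi> = lam * LP X e + Mf*\<beta>*(lam*X/cc)"
  shows "LZ X e - LP X e = \<sigma>*(\<psi>*\<pi> + \<mu>)"
proof -
  have "LZ X e - LP X e = (ss - 1) * LP X e + (LZ X e - ss * LP X e)" by (simp add: algebra_simps)
  also have "\<dots> = lam*\<sigma>*\<psi> * LP X e + \<sigma>*\<mu> + \<sigma>*\<psi>*(Mf*\<beta>*(lam*X/cc))" unfolding ssm1 ss_LP by simp
  also have "\<dots> = \<sigma>*(\<psi>*\<pi> + \<mu>)" unfolding assms by (simp add: algebra_simps)
  finally show ?thesis .
qed

lemma eqZ: "x = M*X - \<sigma>*(-\<mu> - N*(lam*X/cc)) + e \<longleftrightarrow> x = LZ X e"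
  unfolding LZ_def aZX by (simp add: algebra_simps)

lemma eqP: "x = M*X - \<sigma>*(\<psi>*(lam*x + Mf*\<beta>*(lam*X/cc)) - N*(lam*X/cc)) + e \<longleftrightarrow> x = LP X e"
proof -
  have "x = M*X - \<sigma>*(\<psi>*(lam*x + Mf*\<beta>*(lam*X/cc)) - N*(lam*X/cc)) + e \<longleftrightarrow>
        ss * x = LZ X e - \<sigma>*\<mu> - \<sigma>*\<psi>*(Mf*\<beta>*(lam*X/cc))"
    unfolding LZ_def aZX ss_def by (simp add: algebra_simps) 
  also have "\<dots> \<longleftrightarrow> ss * x = ss * LP X e" unfolding ss_LP ..
  also have "\<dots> \<longleftrightarrow> x = LP X e" using ss_pos by simp
  finally show ?thesis .
qed

lemma state_fwd:
  assumes st: "state_ok x \<pi> X e"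
  shows "x = min (LZ X e) (LP X e) \<and> \<pi> = lam*x + Mf*\<beta>*(lam*X/cc) \<and> (\<psi>*\<pi> \<le> -\<mu> \<longleftrightarrow> LZ X e \<le> LP X e)"
proof -
  have pi: "\<pi> = lam*x + Mf*\<beta>*(lam*X/cc)" using st unfolding state_ok_def by blast
  have x0: "x = M*X - \<sigma>*(max (\<psi>*\<pi>) (-\<mu>) - N*(lam*X/cc)) + e" using st unfolding state_ok_def by blast
  show ?thesis
  proof (cases "\<psi>*\<pi> \<le> -\<mu>")
    case True
    then have m: "max (\<psi>*\<pi>) (-\<mu>) = -\<mu>" by simp
    have "x = M*X - \<sigma>*(-\<mu> - N*(lam*X/cc)) + e" using x0 unfolding m .
    then have x: "x = LZ X e" by (rule eqZ[THEN iffD1])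
    have "\<pi> = lam * LZ X e + Mf*\<beta>*(lam*X/cc)" using pi x by simp
    then have "ss * (LZ X e - LP X e) = \<sigma>*(\<psi>*\<pi> + \<mu>)" by (rule caseZ_gap)
    moreover have "\<sigma>*(\<psi>*\<pi> + \<mu>) \<le> 0" using True sg by (simp add: mult_nonneg_nonpos)
    ultimately have "ss * (LZ X e - LP X e) \<le> 0" by simp
    then have "LZ X e \<le> LP X e" using ss_pos by (simp add: mult_le_0_iff)
    then show ?thesis using x pi True by simp
  next
    case False
    then have m: "max (\<psi>*\<pi>) (-\<mu>) = \<psi>*\<pi>" by simp
    have "x = M*X - \<sigma>*(\<psi>*\<pi> - N*(lam*X/cc)) + e" using x0 unfolding m .
    then have "x = M*X - \<sigma>*(\<psi>*(lam*x + Mf*\<beta>*(lam*X/cc)) - N*(lam*X/cc)) + e" using pi by simp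
    then have x: "x = LP X e" by (rule eqP[THEN iffD1])
    have "\<pi> = lam * LP X e + Mf*\<beta>*(lam*X/cc)" using pi x by simp
    then have "LZ X e - LP X e = \<sigma>*(\<psi>*\<pi> + \<mu>)" by (rule caseP_gap)
    moreover have "\<sigma>*(\<psi>*\<pi> + \<mu>) > 0" using False sg by simp
    ultimately have "LP X e < LZ X e" by simp
    then show ?thesis using x pi False by simp
  qed
qed

lemma min_zlb:
  assumes x: "x = min (LZ X e) (LP X e)" and pi: "\<pi> = lam*x + Mf*\<beta>*(lam*X/cc)"
  shows "\<psi>*\<pi> \<le> -\<mu> \<longleftrightarrow> LZ X e \<le> LP X e"
proof (cases "LZ X e \<le> LP X e")
  case True
  then have "x = LZ X e" using x by simp
  then have "\<pi> = lam * LZ X e + Mf*\<beta>*(lam*X/cc)" using pi by simp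
  then have "ss * (LZ X e - LP X e) = \<sigma>*(\<psi>*\<pi> + \<mu>)" by (rule caseZ_gap)
  moreover have "ss * (LZ X e - LP X e) \<le> 0" using True ss_pos by (simp add: mult_nonneg_nonpos)
  ultimately have "\<sigma>*(\<psi>*\<pi> + \<mu>) \<le> 0" by simp
  then have "\<psi>*\<pi> + \<mu> \<le> 0" using sg by (simp add: mult_le_0_iff)
  then show ?thesis using True by simp
next
  case False
  then have "x = LP X e" using x by simp
  then have "\<pi> = lam * LP X e + Mf*\<beta>*(lam*X/cc)" using pi by simp
  then have "LZ X e - LP X e = \<sigma>*(\<psi>*\<pi> + \<mu>)" by (rule caseP_gap)
  then have "\<sigma>*(\<psi>*\<pi> + \<mu>) > 0" using False by simp
  then have "\<psi>*\<pi> + \<mu> > 0" using sg by (simp add: zero_less_mult_iff)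
  then show ?thesis using False by simp
qed

lemma state_bwd:
  assumes x: "x = min (LZ X e) (LP X e)" and pi: "\<pi> = lam*x + Mf*\<beta>*(lam*X/cc)"
  shows "state_ok x \<pi> X e"
proof (cases "LZ X e \<le> LP X e")
  case True
  then have x1: "x = LZ X e" using x by simp
  have "\<psi>*\<pi> \<le> -\<mu>" using min_zlb[OF x pi] True by simp
  then have m: "max (\<psi>*\<pi>) (-\<mu>) = -\<mu>" by simp
  have "x = M*X - \<sigma>*(-\<mu> - N*(lam*X/cc)) + e" using x1 by (rule eqZ[THEN iffD2])
  then show ?thesis unfolding state_ok_def m using pi by blast
next
  case False
  then have x1: "x = LP X e" using x by simp
  have "\<not> \<psi>*\<pi> \<le> -\<mu>" using min_zlb[OF x pi] False by simp
  then have m: "max (\<psi>*\<pi>) (-\<mu>) = \<psi>*\<pi>" by simp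
  have "x = M*X - \<sigma>*(\<psi>*(lam*x + Mf*\<beta>*(lam*X/cc)) - N*(lam*X/cc)) + e" using x1 by (rule eqP[THEN iffD2])
  then have "x = M*X - \<sigma>*(\<psi>*\<pi> - N*(lam*X/cc)) + e" using pi by simp
  then show ?thesis unfolding state_ok_def m using pi by blast
qed

lemma state_iff:
  "state_ok x \<pi> X e \<longleftrightarrow> x = min (LZ X e) (LP X e) \<and> \<pi> = lam*x + Mf*\<beta>*(lam*X/cc)"
  using state_fwd state_bwd by blast

lemma state_zlb:
  "state_ok x \<pi> X e \<Longrightarrow> zlb_binds \<psi> \<mu> \<pi> \<longleftrightarrow> LZ X e \<le> LP X e"
  using state_fwd unfolding zlb_binds_def by blast

lemma rpe_iff:
  "is_BR_RPE \<beta> \<sigma> lam \<mu> \<psi> M Mf N p q e1 e2 (x1,\<pi>1) (x2,\<pi>2) \<longleftrightarrow>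
    state_ok x1 \<pi>1 (qb*x2 + (1-qb)*x1) e1 \<and> state_ok x2 \<pi>2 (qb*x2 + (1-qb)*x1) e2"
proof -
  define X where "X = qb*x2 + (1-qb)*x1"
  define pb where "pb = qb*\<pi>2 + (1-qb)*\<pi>1"
  have R: "is_BR_RPE \<beta> \<sigma> lam \<mu> \<psi> M Mf N p q e1 e2 (x1,\<pi>1) (x2,\<pi>2) \<longleftrightarrow>
     (x1 = M * X - \<sigma> * (max (\<psi> * \<pi>1) (- \<mu>) - N * pb) + e1 \<and> \<pi>1 = lam * x1 + Mf * \<beta> * pb \<and>
      x2 = M * X - \<sigma> * (max (\<psi> * \<pi>2) (- \<mu>) - N * pb) + e2 \<and> \<pi>2 = lam * x2 + Mf * \<beta> * pb)"
    unfolding is_BR_RPE_def Let_def X_def pb_def qb_def by simp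
  have cc0: "cc \<noteq> 0" using cc_pos by simp
  have key: "\<pi>1 = lam * x1 + Mf * \<beta> * pb \<Longrightarrow> \<pi>2 = lam * x2 + Mf * \<beta> * pb \<Longrightarrow> pb = lam*X/cc"
  proof -
    assume h1: "\<pi>1 = lam * x1 + Mf * \<beta> * pb" and h2: "\<pi>2 = lam * x2 + Mf * \<beta> * pb"
    have "pb = qb*\<pi>2 + (1-qb)*\<pi>1" unfolding pb_def ..
    also have "\<dots> = qb*(lam * x2 + Mf * \<beta> * pb) + (1-qb)*(lam * x1 + Mf * \<beta> * pb)"
      using h1 h2 by simp
    also have "\<dots> = lam*X + Mf*\<beta>*pb" unfolding X_def by (simp add: algebra_simps)
    finally have "cc * pb = lam*X" unfolding cc_def by (simp add: algebra_simps)
    then show "pb = lam*X/cc" using cc0 by (simp add: eq_divide_eq mult.commute)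
  qed
  have gen: "\<And>K. qb*(lam*x2 + K) + (1-qb)*(lam*x1 + K) = lam*X + K"
    unfolding X_def by (simp add: algebra_simps)
  have key2: "\<pi>1 = lam*x1 + Mf*\<beta>*(lam*X/cc) \<Longrightarrow> \<pi>2 = lam*x2 + Mf*\<beta>*(lam*X/cc) \<Longrightarrow> pb = lam*X/cc"
  proof -
    assume h1: "\<pi>1 = lam*x1 + Mf*\<beta>*(lam*X/cc)" and h2: "\<pi>2 = lam*x2 + Mf*\<beta>*(lam*X/cc)"
    have "pb = qb*\<pi>2 + (1-qb)*\<pi>1" unfolding pb_def ..
    also have "\<dots> = qb*(lam*x2 + Mf*\<beta>*(lam*X/cc)) + (1-qb)*(lam*x1 + Mf*\<beta>*(lam*X/cc))"
      using h1 h2 by simp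
    also have "\<dots> = lam*X + Mf*\<beta>*(lam*X/cc)" by (rule gen)
    also have "\<dots> = (cc*(lam*X) + Mf*\<beta>*(lam*X))/cc" using cc0 by (simp add: add_divide_distrib)
    also have "cc*(lam*X) + Mf*\<beta>*(lam*X) = lam*X" unfolding cc_def by (simp add: algebra_simps)
    finally show "pb = lam*X/cc" .
  qed
  show ?thesis unfolding R X_def[symmetric] state_ok_def
  proof
    assume H: "x1 = M * X - \<sigma> * (max (\<psi> * \<pi>1) (- \<mu>) - N * pb) + e1 \<and> \<pi>1 = lam * x1 + Mf * \<beta> * pb \<and>
      x2 = M * X - \<sigma> * (max (\<psi> * \<pi>2) (- \<mu>) - N * pb) + e2 \<and> \<pi>2 = lam * x2 + Mf * \<beta> * pb"
    then have pbv: "pb = lam*X/cc" using key by blast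
    show "(x1 = M * X - \<sigma> * (max (\<psi> * \<pi>1) (- \<mu>) - N * (lam * X / cc)) + e1 \<and>
        \<pi>1 = lam * x1 + Mf * \<beta> * (lam * X / cc)) \<and>
       x2 = M * X - \<sigma> * (max (\<psi> * \<pi>2) (- \<mu>) - N * (lam * X / cc)) + e2 \<and>
       \<pi>2 = lam * x2 + Mf * \<beta> * (lam * X / cc)"
      using H unfolding pbv by blast
  next
    assume H: "(x1 = M * X - \<sigma> * (max (\<psi> * \<pi>1) (- \<mu>) - N * (lam * X / cc)) + e1 \<and>
        \<pi>1 = lam * x1 + Mf * \<beta> * (lam * X / cc)) \<and>
       x2 = M * X - \<sigma> * (max (\<psi> * \<pi>2) (- \<mu>) - N * (lam * X / cc)) + e2 \<and>
       \<pi>2 = lam * x2 + Mf * \<beta> * (lam * X / cc)"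
    then have pbv: "pb = lam*X/cc" using key2 by blast
    show "x1 = M * X - \<sigma> * (max (\<psi> * \<pi>1) (- \<mu>) - N * pb) + e1 \<and> \<pi>1 = lam * x1 + Mf * \<beta> * pb \<and>
      x2 = M * X - \<sigma> * (max (\<psi> * \<pi>2) (- \<mu>) - N * pb) + e2 \<and> \<pi>2 = lam * x2 + Mf * \<beta> * pb"
      using H unfolding pbv by blast
  qed
qed


definition "A e1 b1 b2 X = qb * L b2 X e2 + (1-qb) * L b1 X e1 - X"

lemma L_affine: "L b Y e = L b X e + av b * (Y - X)"
  unfolding L_def LZ_def LP_def av_def by (cases b) (simp_all add: algebra_simps)

lemma A_affine: "A e1 b1 b2 Y = A e1 b1 b2 X + S b1 b2 * (Y - X)"
proof -
  have "A e1 b1 b2 Y = qb * (L b2 X e2 + av b2 * (Y - X)) + (1-qb) * (L b1 X e1 + av b1 * (Y - X)) - Y"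
    unfolding A_def using L_affine[of b2 Y e2 X] L_affine[of b1 Y e1 X] by simp
  also have "\<dots> = A e1 b1 b2 X + S b1 b2 * (Y - X)" unfolding A_def S_def by (simp add: algebra_simps)
  finally show ?thesis .
qed

lemma L_mono_e: "e' < e \<Longrightarrow> L b X e' < L b X e"
  unfolding L_def LZ_def LP_def using ss_pos by (cases b) (simp_all add: divide_strict_right_mono)

lemma A_mono: assumes "e1' < e1" "qb < 1" shows "A e1' b1 b2 X < A e1 b1 b2 X"
proof -
  have "(1-qb) * L b1 X e1' < (1-qb) * L b1 X e1" using L_mono_e[OF assms(1)] assms(2) by simp
  then show ?thesis unfolding A_def by simp
qed

lemma min_L: "L (LZ X e \<le> LP X e) X e = min (LZ X e) (LP X e)" "min (LZ X e) (LP X e) \<le> L c X e"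
  unfolding L_def by auto

lemma eq_props:
  assumes "is_BR_RPE \<beta> \<sigma> lam \<mu> \<psi> M Mf N p q e1 e2 Y1 Y2"
  shows "A e1 (zlb_binds \<psi> \<mu> (snd Y1)) (zlb_binds \<psi> \<mu> (snd Y2)) (qb*fst Y2 + (1-qb)*fst Y1) = 0"
    and "0 \<le> A e1 c1 c2 (qb*fst Y2 + (1-qb)*fst Y1)"
    and "fst Y1 = min (LZ (qb*fst Y2 + (1-qb)*fst Y1) e1) (LP (qb*fst Y2 + (1-qb)*fst Y1) e1)"
    and "fst Y2 = min (LZ (qb*fst Y2 + (1-qb)*fst Y1) e2) (LP (qb*fst Y2 + (1-qb)*fst Y1) e2)"
    and "snd Y1 = lam*fst Y1 + Mf*\<beta>*(lam*(qb*fst Y2 + (1-qb)*fst Y1)/cc)"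
    and "snd Y2 = lam*fst Y2 + Mf*\<beta>*(lam*(qb*fst Y2 + (1-qb)*fst Y1)/cc)"
    and "zlb_binds \<psi> \<mu> (snd Y1) \<longleftrightarrow> LZ (qb*fst Y2 + (1-qb)*fst Y1) e1 \<le> LP (qb*fst Y2 + (1-qb)*fst Y1) e1"
    and "zlb_binds \<psi> \<mu> (snd Y2) \<longleftrightarrow> LZ (qb*fst Y2 + (1-qb)*fst Y1) e2 \<le> LP (qb*fst Y2 + (1-qb)*fst Y1) e2"
proof -
  obtain x1 \<pi>1 x2 \<pi>2 where Y: "Y1 = (x1,\<pi>1)" "Y2 = (x2,\<pi>2)" by (cases Y1, cases Y2) auto
  define X where "X = qb*x2 + (1-qb)*x1"
  have "state_ok x1 \<pi>1 X e1 \<and> state_ok x2 \<pi>2 X e2"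
    using rpe_iff[THEN iffD1, OF assms[unfolded Y]] unfolding X_def .
  then have st: "state_ok x1 \<pi>1 X e1" "state_ok x2 \<pi>2 X e2" by simp_all
  have m1: "x1 = min (LZ X e1) (LP X e1)" and p1: "\<pi>1 = lam*x1 + Mf*\<beta>*(lam*X/cc)" using state_iff st(1) by auto
  have m2: "x2 = min (LZ X e2) (LP X e2)" and p2: "\<pi>2 = lam*x2 + Mf*\<beta>*(lam*X/cc)" using state_iff st(2) by auto
  have z1: "zlb_binds \<psi> \<mu> \<pi>1 \<longleftrightarrow> LZ X e1 \<le> LP X e1" using state_zlb st(1) by blast
  have z2: "zlb_binds \<psi> \<mu> \<pi>2 \<longleftrightarrow> LZ X e2 \<le> LP X e2" using state_zlb st(2) by blast
  have l1: "L (zlb_binds \<psi> \<mu> \<pi>1) X e1 = x1" unfolding z1 min_L m1 ..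
  have l2: "L (zlb_binds \<psi> \<mu> \<pi>2) X e2 = x2" unfolding z2 min_L m2 ..
  have XX: "qb*fst Y2 + (1-qb)*fst Y1 = X" unfolding Y X_def by simp
  have "A e1 (zlb_binds \<psi> \<mu> \<pi>1) (zlb_binds \<psi> \<mu> \<pi>2) X = qb*x2 + (1-qb)*x1 - X"
    unfolding A_def l1 l2 ..
  also have "\<dots> = 0" unfolding X_def by simp
  finally show "A e1 (zlb_binds \<psi> \<mu> (snd Y1)) (zlb_binds \<psi> \<mu> (snd Y2)) (qb*fst Y2 + (1-qb)*fst Y1) = 0"
    unfolding Y fst_conv snd_conv X_def[symmetric] .
  have "x1 \<le> L c1 X e1" using m1 min_L(2) by simp
  then have a1: "(1-qb)*x1 \<le> (1-qb)*L c1 X e1" using qb_bounds by (simp add: mult_left_mono)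
  have "x2 \<le> L c2 X e2" using m2 min_L(2) by simp
  then have a2: "qb*x2 \<le> qb*L c2 X e2" using qb_bounds by (simp add: mult_left_mono)
  have "0 \<le> A e1 c1 c2 X" unfolding A_def using a1 a2 X_def by linarith
  then show "0 \<le> A e1 c1 c2 (qb*fst Y2 + (1-qb)*fst Y1)" unfolding Y fst_conv snd_conv X_def[symmetric] .
  show "fst Y1 = min (LZ (qb*fst Y2 + (1-qb)*fst Y1) e1) (LP (qb*fst Y2 + (1-qb)*fst Y1) e1)"
    unfolding Y fst_conv snd_conv X_def[symmetric] by (rule m1)
  show "fst Y2 = min (LZ (qb*fst Y2 + (1-qb)*fst Y1) e2) (LP (qb*fst Y2 + (1-qb)*fst Y1) e2)"
    unfolding Y fst_conv snd_conv X_def[symmetric] by (rule m2)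
  show "snd Y1 = lam*fst Y1 + Mf*\<beta>*(lam*(qb*fst Y2 + (1-qb)*fst Y1)/cc)"
    unfolding Y fst_conv snd_conv X_def[symmetric] by (rule p1)
  show "snd Y2 = lam*fst Y2 + Mf*\<beta>*(lam*(qb*fst Y2 + (1-qb)*fst Y1)/cc)"
    unfolding Y fst_conv snd_conv X_def[symmetric] by (rule p2)
  show "zlb_binds \<psi> \<mu> (snd Y1) \<longleftrightarrow> LZ (qb*fst Y2 + (1-qb)*fst Y1) e1 \<le> LP (qb*fst Y2 + (1-qb)*fst Y1) e1"
    unfolding Y fst_conv snd_conv X_def[symmetric] by (rule z1)
  show "zlb_binds \<psi> \<mu> (snd Y2) \<longleftrightarrow> LZ (qb*fst Y2 + (1-qb)*fst Y1) e2 \<le> LP (qb*fst Y2 + (1-qb)*fst Y1) e2"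
    unfolding Y fst_conv snd_conv X_def[symmetric] by (rule z2)
qed

lemma eq_same_X:
  assumes "is_BR_RPE \<beta> \<sigma> lam \<mu> \<psi> M Mf N p q e1 e2 Y1 Y2"
    and "is_BR_RPE \<beta> \<sigma> lam \<mu> \<psi> M Mf N p q e1 e2 Z1 Z2"
    and "qb*fst Y2 + (1-qb)*fst Y1 = qb*fst Z2 + (1-qb)*fst Z1"
  shows "Y1 = Z1 \<and> Y2 = Z2"
proof -
  note a = eq_props[OF assms(1)] and b = eq_props[OF assms(2)]
  define X where "X = qb*fst Y2 + (1-qb)*fst Y1"
  have XZ: "qb*fst Z2 + (1-qb)*fst Z1 = X" using assms(3) X_def by simp
  have y1: "fst Y1 = min (LZ X e1) (LP X e1)" using a(3) unfolding X_def .
  have y2: "fst Y2 = min (LZ X e2) (LP X e2)" using a(4) unfolding X_def .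
  have z1: "fst Z1 = min (LZ X e1) (LP X e1)" using b(3) unfolding XZ .
  have z2: "fst Z2 = min (LZ X e2) (LP X e2)" using b(4) unfolding XZ .
  have y5: "snd Y1 = lam*fst Y1 + Mf*\<beta>*(lam*X/cc)" using a(5) unfolding X_def .
  have y6: "snd Y2 = lam*fst Y2 + Mf*\<beta>*(lam*X/cc)" using a(6) unfolding X_def .
  have z5: "snd Z1 = lam*fst Z1 + Mf*\<beta>*(lam*X/cc)" using b(5) unfolding XZ .
  have z6: "snd Z2 = lam*fst Z2 + Mf*\<beta>*(lam*X/cc)" using b(6) unfolding XZ .
  show ?thesis using y1 y2 z1 z2 y5 y6 z5 z6 by (simp add: prod_eq_iff)
qed

lemma constr:
  assumes all: "\<And>c1 c2. 0 \<le> A e1 c1 c2 X" and d: "A e1 d1 d2 X = 0"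
  shows "\<exists>Y1 Y2. is_BR_RPE \<beta> \<sigma> lam \<mu> \<psi> M Mf N p q e1 e2 Y1 Y2 \<and> qb*fst Y2 + (1-qb)*fst Y1 = X"
proof -
  define x1 where "x1 = min (LZ X e1) (LP X e1)"
  define x2 where "x2 = min (LZ X e2) (LP X e2)"
  define \<pi>1 where "\<pi>1 = lam*x1 + Mf*\<beta>*(lam*X/cc)"
  define \<pi>2 where "\<pi>2 = lam*x2 + Mf*\<beta>*(lam*X/cc)"
  have l1: "L (LZ X e1 \<le> LP X e1) X e1 = x1" unfolding x1_def by (rule min_L(1))
  have l2: "L (LZ X e2 \<le> LP X e2) X e2 = x2" unfolding x2_def by (rule min_L(1))
  have ge: "0 \<le> qb*x2 + (1-qb)*x1 - X" using all[of "LZ X e1 \<le> LP X e1" "LZ X e2 \<le> LP X e2"]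
    unfolding A_def l1 l2 .
  have "x1 \<le> L d1 X e1" unfolding x1_def by (rule min_L(2))
  then have a1: "(1-qb)*x1 \<le> (1-qb)*L d1 X e1" using qb_bounds by (simp add: mult_left_mono)
  have "x2 \<le> L d2 X e2" unfolding x2_def by (rule min_L(2))
  then have a2: "qb*x2 \<le> qb*L d2 X e2" using qb_bounds by (simp add: mult_left_mono)
  have XX: "qb*x2 + (1-qb)*x1 = X" using ge a1 a2 d unfolding A_def by linarith
  have "state_ok x1 \<pi>1 X e1" by (rule state_bwd) (simp_all add: x1_def \<pi>1_def)
  moreover have "state_ok x2 \<pi>2 X e2" by (rule state_bwd) (simp_all add: x2_def \<pi>2_def)
  ultimately have "is_BR_RPE \<beta> \<sigma> lam \<mu> \<psi> M Mf N p q e1 e2 (x1,\<pi>1) (x2,\<pi>2)"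
    using rpe_iff XX by simp
  then show ?thesis using XX by (intro exI[of _ "(x1,\<pi>1)"] exI[of _ "(x2,\<pi>2)"]) simp
qed

lemma tau_neg:
  assumes "LZ t e2 = LP t e2"
  shows "t < 0"
proof (rule ccontr)
  assume "\<not> t < 0"
  then have t: "t \<ge> 0" by simp
  have "ss * LP t e2 - LP t e2 = LZ t e2 - \<sigma>*\<mu> - \<sigma>*\<psi>*(Mf*\<beta>*(lam*t/cc)) - LZ t e2"
    using ss_LP assms by simp
  then have eq: "lam*\<sigma>*\<psi> * LZ t e2 + \<sigma>*\<psi>*(Mf*\<beta>*(lam*t/cc)) = - \<sigma>*\<mu>"
    using assms ssm1 by (simp add: algebra_simps)
  have "aZ * t \<ge> 0" using aZ_pos t by simp
  moreover have "\<sigma>*\<mu> > 0" using sg mu by simp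
  ultimately have "LZ t e2 > 0" unfolding LZ_def using e2 by linarith
  then have "lam*\<sigma>*\<psi> * LZ t e2 > 0" using lam sg psi by simp
  moreover have "\<sigma>*\<psi>*(Mf*\<beta>*(lam*t/cc)) \<ge> 0" using sg psi Mf0 b0 lam t cc_pos by simp
  moreover have "- \<sigma>*\<mu> < 0" using sg mu by simp
  ultimately show False using eq by linarith
qed

lemma S_FF: "S False False = aP - 1" unfolding S_def av_def by (simp add: algebra_simps)

lemma S_neg_all: "aZ < 1 \<Longrightarrow> S b1 b2 < 0"
proof -
  assume z: "aZ < 1"
  have lt: "av b < 1" for b using z aP_lt1 unfolding av_def by simp
  have le: "av b \<le> 1" for b using lt less_imp_le by blast
  have "qb * av b2 \<le> qb" using mult_left_mono[OF le qb_bounds(1)] by simp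
  moreover have "(1-qb) * av b1 \<le> (1-qb)" using mult_left_mono[OF le, of "1-qb"] qb_bounds by simp
  moreover have "qb * av b2 < qb \<or> (1-qb) * av b1 < (1-qb)"
  proof (cases "qb = 0")
    case True then show ?thesis using lt by simp
  next
    case False then have "qb > 0" using qb_bounds by simp
    then show ?thesis using lt mult_strict_left_mono[of "av b2" 1 qb] by simp
  qed
  ultimately show ?thesis unfolding S_def by linarith
qed


abbreviation "RPE e Y1 Y2 \<equiv> is_BR_RPE \<beta> \<sigma> lam \<mu> \<psi> M Mf N p q e e2 Y1 Y2"
abbreviation "lab Y \<equiv> zlb_binds \<psi> \<mu> (snd Y)"
abbreviation "Xo Y1 Y2 \<equiv> qb*fst Y2 + (1-qb)*fst Y1"

lemma stab_right:
  assumes Y: "RPE e1 Y1 Y2" and Z: "RPE e1 Z1 Z2" and S: "S (lab Y1) (lab Y2) < 0"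
  shows "\<not> Xo Y1 Y2 < Xo Z1 Z2"
proof
  assume lt: "Xo Y1 Y2 < Xo Z1 Z2"
  have "A e1 (lab Y1) (lab Y2) (Xo Z1 Z2) = A e1 (lab Y1) (lab Y2) (Xo Y1 Y2) + S (lab Y1) (lab Y2) * (Xo Z1 Z2 - Xo Y1 Y2)"
    by (rule A_affine)
  also have "A e1 (lab Y1) (lab Y2) (Xo Y1 Y2) = 0" by (rule eq_props(1)[OF Y])
  finally have "A e1 (lab Y1) (lab Y2) (Xo Z1 Z2) = S (lab Y1) (lab Y2) * (Xo Z1 Z2 - Xo Y1 Y2)" by simp
  moreover have "S (lab Y1) (lab Y2) * (Xo Z1 Z2 - Xo Y1 Y2) < 0" using S lt by (simp add: mult_neg_pos)
  moreover have "0 \<le> A e1 (lab Y1) (lab Y2) (Xo Z1 Z2)" by (rule eq_props(2)[OF Z])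
  ultimately show False by simp
qed

lemma uniq_stable:
  assumes Y: "RPE e1 Y1 Y2" and Z: "RPE e1 Z1 Z2"
    and SY: "S (lab Y1) (lab Y2) < 0" and SZ: "S (lab Z1) (lab Z2) < 0"
  shows "Y1 = Z1 \<and> Y2 = Z2"
proof -
  have "\<not> Xo Y1 Y2 < Xo Z1 Z2" by (rule stab_right[OF Y Z SY])
  moreover have "\<not> Xo Z1 Z2 < Xo Y1 Y2" by (rule stab_right[OF Z Y SZ])
  ultimately have "Xo Y1 Y2 = Xo Z1 Z2" by linarith
  then show ?thesis by (rule eq_same_X[OF Y Z])
qed

lemma LZ_shift: "LZ Y e = LZ X e + aZ*(Y - X)" unfolding LZ_def by (simp add: algebra_simps)
lemma LP_shift: "LP Y e = LP X e + aP*(Y - X)" unfolding LP_def by (simp add: algebra_simps)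

lemma part2:
  assumes Y: "RPE e1 Y1 Y2" and SY: "S (lab Y1) (lab Y2) < 0" and aZ1: "aZ \<ge> 1"
  shows "\<not> lab Y2"
proof
  assume b2: "lab Y2"
  have nb1: "\<not> lab Y1"
  proof
    assume "lab Y1"
    then have "S (lab Y1) (lab Y2) = aZ - 1" using b2 unfolding S_def av_def by (simp add: algebra_simps)
    then show False using SY aZ1 by simp
  qed
  define X where "X = Xo Y1 Y2"
  have g1: "\<not> LZ X e1 \<le> LP X e1" using eq_props(7)[OF Y] nb1 unfolding X_def by simp
  have g2: "LZ X e2 \<le> LP X e2" using eq_props(8)[OF Y] b2 unfolding X_def by simp
  have gd: "(LZ X e1 - LP X e1) - (LZ X e2 - LP X e2) = (e1 - e2) * (1 - 1/ss)"
    unfolding LZ_def LP_def by (simp add: algebra_simps diff_divide_distrib)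
  have "(e1 - e2) * (1 - 1/ss) > 0" using g1 g2 gd by linarith
  moreover have "1 - 1/ss > 0" using ss_pos by simp
  ultimately have e12: "e2 \<le> e1" by (simp add: zero_less_mult_iff)
  have dpos: "aZ - aP > 0" using aP_lt_aZ by simp
  define \<tau> where "\<tau> = X - (LZ X e2 - LP X e2)/(aZ - aP)"
  have "(LZ X e2 - LP X e2)/(aZ - aP) \<le> 0" using g2 dpos by (simp add: divide_nonpos_pos)
  then have tX: "\<tau> - X \<ge> 0" unfolding \<tau>_def by simp
  have "LZ \<tau> e2 - LP \<tau> e2 = (LZ X e2 - LP X e2) + (aZ - aP)*(\<tau> - X)"
    using LZ_shift[of \<tau> e2 X] LP_shift[of \<tau> e2 X] by (simp add: algebra_simps)
  also have "(aZ - aP)*(\<tau> - X) = - (LZ X e2 - LP X e2)" unfolding \<tau>_def using dpos by simp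
  finally have eqt: "LZ \<tau> e2 = LP \<tau> e2" by simp
  have tneg: "\<tau> < 0" by (rule tau_neg[OF eqt])
  have "A e1 False True \<tau> = A e1 False True X + S False True * (\<tau> - X)" by (rule A_affine)
  moreover have "A e1 False True X = 0" using eq_props(1)[OF Y] nb1 b2 unfolding X_def by simp
  moreover have "S False True < 0" using SY nb1 b2 by simp
  ultimately have "A e1 False True \<tau> \<le> 0" using tX by (simp add: mult_nonpos_nonneg)
  moreover have "A e1 False True \<tau> = qb * LZ \<tau> e2 + (1-qb) * LP \<tau> e1 - \<tau>" unfolding A_def L_def by simp
  moreover have "LP \<tau> e2 \<le> LP \<tau> e1" unfolding LP_def using e12 ss_pos by (simp add: divide_right_mono)
  moreover have "(1-qb) * LP \<tau> e2 \<le> (1-qb) * LP \<tau> e1"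
    using calculation(3) qb_bounds by (simp add: mult_left_mono)
  moreover have "qb * LZ \<tau> e2 = qb * LP \<tau> e2" using eqt by simp
  ultimately have "qb * LP \<tau> e2 + (1-qb) * LP \<tau> e2 - \<tau> \<le> 0" by linarith
  then have "LP \<tau> e2 - \<tau> \<le> 0" by (simp add: algebra_simps)
  moreover have "LP \<tau> e2 - \<tau> = (aP - 1)*\<tau> + e2/ss" unfolding LP_def by (simp add: algebra_simps)
  moreover have "(aP - 1)*\<tau> > 0" using aP_lt1 tneg by (simp add: mult_neg_neg)
  moreover have "e2/ss \<ge> 0" using e2 ss_pos by simp
  ultimately show False by linarith
qed


lemma root_zero:
  assumes "S b1 b2 < 0"
  shows "A e1 b1 b2 (X0 - A e1 b1 b2 X0 / S b1 b2) = 0"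
proof -
  have "A e1 b1 b2 (X0 - A e1 b1 b2 X0 / S b1 b2) = A e1 b1 b2 X0 + S b1 b2 * (X0 - A e1 b1 b2 X0 / S b1 b2 - X0)"
    by (rule A_affine)
  also have "\<dots> = 0" using assms by simp
  finally show ?thesis .
qed

lemma exist_stable:
  assumes threshold: "\<forall>e. (\<exists>Y1 Y2. RPE e Y1 Y2) \<longleftrightarrow> ebar \<le> ereal e"
    and e1: "ereal e1 > ebar"
  shows "\<exists>Y1 Y2. RPE e1 Y1 Y2 \<and> S (lab Y1) (lab Y2) < 0"
proof -
  have "ebar \<le> ereal e1" using e1 by (rule less_imp_le)
  then have "\<exists>Y1 Y2. RPE e1 Y1 Y2" using spec[OF threshold, of e1] by simp
  then obtain Y01 Y02 where Y0: "RPE e1 Y01 Y02" by blast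
  define X0 where "X0 = Xo Y01 Y02"
  have all0: "0 \<le> A e1 c1 c2 X0" for c1 c2 unfolding X0_def by (rule eq_props(2)[OF Y0])
  define root where "root b = X0 - A e1 (fst b) (snd b) X0 / S (fst b) (snd b)" for b :: "bool \<times> bool"
  define NS where "NS = {b :: bool \<times> bool. S (fst b) (snd b) < 0}"
  have fin: "finite NS" by simp
  have ne: "(False, False) \<in> NS" unfolding NS_def using S_FF aP_lt1 by simp
  define z where "z = Min (root ` NS)"
  have "z \<in> root ` NS" unfolding z_def using fin ne by (intro Min_in) auto
  then obtain bs where bs: "bs \<in> NS" "z = root bs" by blast
  have zle: "z \<le> root b" if "b \<in> NS" for b unfolding z_def using fin that by simp
  have Abs: "A e1 (fst bs) (snd bs) z = 0"
    unfolding bs(2) root_def by (rule root_zero) (use bs(1) NS_def in simp)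
  have "A e1 (fst bs) (snd bs) X0 / S (fst bs) (snd bs) \<le> 0"
    using all0 bs(1) unfolding NS_def by (simp add: divide_nonneg_neg)
  then have zX0: "z \<ge> X0" unfolding bs(2) root_def by simp
  have allz: "0 \<le> A e1 c1 c2 z" for c1 c2
  proof (cases "(c1, c2) \<in> NS")
    case True
    then have Sn: "S c1 c2 < 0" unfolding NS_def by simp
    have "A e1 c1 c2 z = A e1 c1 c2 (root (c1,c2)) + S c1 c2 * (z - root (c1,c2))" by (rule A_affine)
    also have "A e1 c1 c2 (root (c1,c2)) = 0" unfolding root_def using root_zero Sn by simp
    finally have "A e1 c1 c2 z = S c1 c2 * (z - root (c1,c2))" by simp
    moreover have "z - root (c1,c2) \<le> 0" using zle[OF True] by simp
    ultimately show ?thesis using Sn by (simp add: mult_nonpos_nonpos)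
  next
    case False
    then have Sn: "S c1 c2 \<ge> 0" unfolding NS_def by simp
    have "A e1 c1 c2 z = A e1 c1 c2 X0 + S c1 c2 * (z - X0)" by (rule A_affine)
    moreover have "S c1 c2 * (z - X0) \<ge> 0" using Sn zX0 by simp
    ultimately show ?thesis using all0[of c1 c2] by linarith
  qed
  obtain Y1 Y2 where Y: "RPE e1 Y1 Y2" and XY: "Xo Y1 Y2 = z"
    using constr[of e1 z "fst bs" "snd bs"] allz Abs by blast
  show ?thesis
  proof (cases "S (lab Y1) (lab Y2) < 0")
    case True
    then show ?thesis using Y by blast
  next
    case False
    then have Sl: "S (lab Y1) (lab Y2) \<ge> 0" by simp
    have Al: "A e1 (lab Y1) (lab Y2) z = 0" using eq_props(1)[OF Y] XY by simp
    have Sbs: "S (fst bs) (snd bs) < 0" using bs(1) unfolding NS_def by simp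
    show ?thesis
    proof (cases "qb < 1")
      case True
      obtain e1' where e1': "ebar < ereal e1'" "ereal e1' < ereal e1" using ereal_dense2[OF e1] by blast
      then have e1'lt: "e1' < e1" by simp
      have "ebar \<le> ereal e1'" using e1'(1) by (rule less_imp_le)
      then have "\<exists>Y1 Y2. RPE e1' Y1 Y2" using spec[OF threshold, of e1'] by simp
      then obtain Y1' Y2' where Y': "RPE e1' Y1' Y2'" by blast
      define X' where "X' = Xo Y1' Y2'"
      have all': "0 \<le> A e1' c1 c2 X'" for c1 c2 unfolding X'_def by (rule eq_props(2)[OF Y'])
      show ?thesis
      proof (cases "X' \<le> z")
        case True
        have "A e1 (lab Y1) (lab Y2) X' = A e1 (lab Y1) (lab Y2) z + S (lab Y1) (lab Y2) * (X' - z)" by (rule A_affine)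
        moreover have "S (lab Y1) (lab Y2) * (X' - z) \<le> 0" using Sl True by (simp add: mult_nonneg_nonpos)
        ultimately have "A e1 (lab Y1) (lab Y2) X' \<le> 0" using Al by simp
        moreover have "A e1' (lab Y1) (lab Y2) X' < A e1 (lab Y1) (lab Y2) X'" by (rule A_mono[OF e1'lt \<open>qb < 1\<close>])
        ultimately show ?thesis using all'[of "lab Y1" "lab Y2"] by linarith
      next
        case False
        have "A e1 (fst bs) (snd bs) X' = A e1 (fst bs) (snd bs) z + S (fst bs) (snd bs) * (X' - z)" by (rule A_affine)
        moreover have "S (fst bs) (snd bs) * (X' - z) \<le> 0" using Sbs False by (simp add: mult_nonpos_nonneg)
        ultimately have "A e1 (fst bs) (snd bs) X' \<le> 0" using Abs by simp
        moreover have "A e1' (fst bs) (snd bs) X' < A e1 (fst bs) (snd bs) X'" by (rule A_mono[OF e1'lt \<open>qb < 1\<close>])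
        ultimately show ?thesis using all'[of "fst bs" "snd bs"] by linarith
      qed
    next
      case False
      then have q1: "qb = 1" using qb_bounds by simp
      have Sq: "S b1 b2 = av b2 - 1" for b1 b2 unfolding S_def q1 by simp
      have l2: "lab Y2" using Sl aP_lt1 unfolding Sq av_def by (cases "lab Y2") auto
      have aZ1: "aZ \<ge> 1" using Sl l2 unfolding Sq av_def by simp
      have b2: "\<not> snd bs" using Sbs aZ1 unfolding Sq av_def by (cases "snd bs") auto
      have "A e1 (lab Y1) (lab Y2) z = LZ z e2 - z" unfolding A_def L_def q1 using l2 by simp
      then have zZ: "LZ z e2 = z" using Al by simp
      have "A e1 (fst bs) (snd bs) z = LP z e2 - z" unfolding A_def L_def q1 using b2 by simp
      then have zP: "LP z e2 = z" using Abs by simp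
      have zneg: "z < 0" by (rule tau_neg) (simp add: zZ zP)
      have "(1 - aP) * z = e2/ss" using zP unfolding LP_def by (simp add: algebra_simps)
      moreover have "e2/ss \<ge> 0" using e2 ss_pos by simp
      moreover have "1 - aP > 0" using aP_lt1 by simp
      ultimately have "z \<ge> 0"
      proof -
        assume a: "(1 - aP) * z = e2/ss" "e2/ss \<ge> 0" "1 - aP > 0"
        show "z \<ge> 0"
        proof (rule ccontr)
          assume "\<not> z \<ge> 0"
          then have "(1 - aP) * z < 0" using a(3) by (simp add: mult_pos_neg)
          then show False using a(1,2) by simp
        qed
      qed
      then show ?thesis using zneg by simp
    qed
  qed
qed

lemma main:
  assumes threshold: "\<forall>e. (\<exists>Y1 Y2. is_BR_RPE \<beta> \<sigma> lam \<mu> \<psi> M Mf N p q e e2 Y1 Y2) \<longleftrightarrow> ebar \<le> ereal e"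
    and e1: "ereal e1 > ebar"
  shows "(\<exists>!Y. is_BR_RPE \<beta> \<sigma> lam \<mu> \<psi> M Mf N p q e1 e2 (fst Y) (snd Y) \<and>
               E_stable \<beta> \<sigma> lam \<mu> \<psi> M Mf N p q (fst Y) (snd Y))
    \<and> ((M - 1) * (1 - Mf * \<beta>) + lam * \<sigma> * N \<ge> 0 \<longrightarrow>
         (\<forall>Y1 Y2. is_BR_RPE \<beta> \<sigma> lam \<mu> \<psi> M Mf N p q e1 e2 Y1 Y2 \<and>
                  E_stable \<beta> \<sigma> lam \<mu> \<psi> M Mf N p q Y1 Y2 \<longrightarrow>
                  type_of \<psi> \<mu> Y1 Y2 \<in> {PP, ZP}))
    \<and> ((M - 1) * (1 - Mf * \<beta>) + lam * \<sigma> * N < 0 \<longrightarrow>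
         (\<forall>Y1 Y2. is_BR_RPE \<beta> \<sigma> lam \<mu> \<psi> M Mf N p q e1 e2 Y1 Y2 \<and>
                  E_stable \<beta> \<sigma> lam \<mu> \<psi> M Mf N p q Y1 Y2 \<longrightarrow>
                  (\<forall>Z1 Z2. is_BR_RPE \<beta> \<sigma> lam \<mu> \<psi> M Mf N p q e1 e2 Z1 Z2 \<longrightarrow>
                           Z1 = Y1 \<and> Z2 = Y2)))"
proof (intro conjI impI allI)
  obtain Y1 Y2 where Y: "RPE e1 Y1 Y2" and SY: "S (lab Y1) (lab Y2) < 0"
    using exist_stable[OF threshold e1] by blast
  show "\<exists>!Y. is_BR_RPE \<beta> \<sigma> lam \<mu> \<psi> M Mf N p q e1 e2 (fst Y) (snd Y) \<and>
               E_stable \<beta> \<sigma> lam \<mu> \<psi> M Mf N p q (fst Y) (snd Y)"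
  proof (rule ex1I[of _ "(Y1, Y2)"])
    show "RPE e1 (fst (Y1, Y2)) (snd (Y1, Y2)) \<and> E_stable \<beta> \<sigma> lam \<mu> \<psi> M Mf N p q (fst (Y1, Y2)) (snd (Y1, Y2))"
      using Y SY Estab by simp
  next
    fix Z assume "RPE e1 (fst Z) (snd Z) \<and> E_stable \<beta> \<sigma> lam \<mu> \<psi> M Mf N p q (fst Z) (snd Z)"
    then have Z: "RPE e1 (fst Z) (snd Z)" and SZ: "S (lab (fst Z)) (lab (snd Z)) < 0" using Estab by auto
    have "fst Z = Y1 \<and> snd Z = Y2" using uniq_stable[OF Z Y SZ SY] .
    then show "Z = (Y1, Y2)" by (simp add: prod_eq_iff)
  qed
next
  fix Y1 Y2
  assume d: "(M - 1) * (1 - Mf * \<beta>) + lam * \<sigma> * N \<ge> 0"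
    and h: "RPE e1 Y1 Y2 \<and> E_stable \<beta> \<sigma> lam \<mu> \<psi> M Mf N p q Y1 Y2"
  have SY: "S (lab Y1) (lab Y2) < 0" using h Estab by simp
  have aZ1: "aZ \<ge> 1" using aZ_delta d by simp
  have Y: "RPE e1 Y1 Y2" using h by simp
  have "\<not> lab Y2" by (rule part2[OF Y SY aZ1])
  then show "type_of \<psi> \<mu> Y1 Y2 \<in> {PP, ZP}" unfolding type_of_def by auto
next
  fix Y1 Y2 Z1 Z2
  assume d: "(M - 1) * (1 - Mf * \<beta>) + lam * \<sigma> * N < 0"
    and h: "RPE e1 Y1 Y2 \<and> E_stable \<beta> \<sigma> lam \<mu> \<psi> M Mf N p q Y1 Y2"
    and Z: "RPE e1 Z1 Z2"
  have aZ: "aZ < 1" using aZ_delta d by linarith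
  have "Z1 = Y1 \<and> Z2 = Y2" using uniq_stable[OF Z _ S_neg_all[OF aZ] S_neg_all[OF aZ]] h by blast
  then show "Z1 = Y1" "Z2 = Y2" by simp_all
qed

end

theorem proposition13:
  fixes \<beta> \<sigma> lam \<mu> \<psi> M Mf N p q e1 e2 :: real and ebar :: ereal
  assumes "0 < \<beta>" "\<beta> < 1" "\<sigma> > 0" "lam > 0" "\<mu> > 0" "\<psi> > 1"
    and "0 < M" "M \<le> 1" "0 < Mf" "Mf \<le> 1" "0 < N" "N \<le> 1" "min M (min Mf N) < 1"
    and "0 < p" "p \<le> 1" "0 < q" "q \<le> 1" "(p, q) \<noteq> (1, 1)"
    and "e2 \<ge> 0"
    and "ebar < \<infinity>"
    and threshold: "\<forall>e. (\<exists>Y1 Y2. is_BR_RPE \<beta> \<sigma> lam \<mu> \<psi> M Mf N p q e e2 Y1 Y2) \<longleftrightarrow> ebar \<le> ereal e"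
    and "ereal e1 > ebar"
  shows "(\<exists>!Y. is_BR_RPE \<beta> \<sigma> lam \<mu> \<psi> M Mf N p q e1 e2 (fst Y) (snd Y) \<and>
               E_stable \<beta> \<sigma> lam \<mu> \<psi> M Mf N p q (fst Y) (snd Y))
    \<and> ((M - 1) * (1 - Mf * \<beta>) + lam * \<sigma> * N \<ge> 0 \<longrightarrow>
         (\<forall>Y1 Y2. is_BR_RPE \<beta> \<sigma> lam \<mu> \<psi> M Mf N p q e1 e2 Y1 Y2 \<and>
                  E_stable \<beta> \<sigma> lam \<mu> \<psi> M Mf N p q Y1 Y2 \<longrightarrow>
                  type_of \<psi> \<mu> Y1 Y2 \<in> {PP, ZP}))
    \<and> ((M - 1) * (1 - Mf * \<beta>) + lam * \<sigma> * N < 0 \<longrightarrow>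
         (\<forall>Y1 Y2. is_BR_RPE \<beta> \<sigma> lam \<mu> \<psi> M Mf N p q e1 e2 Y1 Y2 \<and>
                  E_stable \<beta> \<sigma> lam \<mu> \<psi> M Mf N p q Y1 Y2 \<longrightarrow>
                  (\<forall>Z1 Z2. is_BR_RPE \<beta> \<sigma> lam \<mu> \<psi> M Mf N p q e1 e2 Z1 Z2 \<longrightarrow>
                           Z1 = Y1 \<and> Z2 = Y2)))"
proof -
  have B: "brm \<beta> \<sigma> lam \<mu> \<psi> M Mf N p q e2"
    unfolding brm_def using assms by auto
  show ?thesis by (rule brm.main[OF B threshold assms(22)])
qed

end
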